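(* Let $\alpha$ be a unit speed Frenet curve in $\mathbb{E}^3$ and $\beta$ an osculating mate of $\alpha$ with binormal $\bar B$. The following are equivalent: (i) the binormal indicatrix $\bar B$ of $\beta$ is a general helix; (ii) $\beta$ is a slant helix; (iii) $\alpha$ is a general helix.
   Context: $\alpha:I\to\mathbb{E}^3$ is parametrized by arclength $s$, with Frenet frame $\{T,N,B\}$, curvature $\kappa>0$, torsion $\tau$. An osculating mate of $\alpha$ is a curve $\beta(s)=\int(x_1T+x_2N)ds$ with smooth $x_1,x_2$, $x_1^2+x_2^2=1$ and $\beta''\perp\mathrm{span}\{T,N\}$; $\beta$ is assumed to be a Frenet curve, unit speed in $s$, with Frenet frame $\{\bar T,\bar N,\bar B\}$. The binormal indicatrix of $\beta$ is the spherical curve $s\mapsto\bar B(s)$. A general helix is a curve whose tangent makes a constant angle with a fixed direction (equivalently torsion/curvature is constant). A slant helix is a curve whose principal normal makes a constant angle with a fixed direction (equivalently $\frac{k^2}{(k^2+t^2)^{3/2}}(t/k)'$ is constant, $k,t$ its curvature and torsion).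
   Formalization: The binormal indicatrix $\bar B$ of $\beta$ is also assumed regular, its derivative $\bar B'(s)$ being nonzero at every s in I, so the torsion of $\beta$ never vanishes. The paper assumes this as well. *)

theory Defs
  imports "HOL-Analysis.Analysis"
begin

definition frenet_frame ::
  "real set \<Rightarrow> (real \<Rightarrow> real^3) \<Rightarrow> (real \<Rightarrow> real^3) \<Rightarrow> (real \<Rightarrow> real^3) \<Rightarrow> (real \<Rightarrow> real^3)
   \<Rightarrow> (real \<Rightarrow> real) \<Rightarrow> (real \<Rightarrow> real) \<Rightarrow> bool" where
  "frenet_frame I c T N B k t \<longleftrightarrow>
     continuous_on I k \<and> continuous_on I t \<and>
     (\<forall>s\<in>I.
        (c has_vector_derivative T s) (at s) \<and>
        (T has_vector_derivative (k s *\<^sub>R N s)) (at s) \<and>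
        (N has_vector_derivative (- (k s) *\<^sub>R T s + t s *\<^sub>R B s)) (at s) \<and>
        (B has_vector_derivative (- (t s) *\<^sub>R N s)) (at s) \<and>
        norm (T s) = 1 \<and> norm (N s) = 1 \<and> T s \<bullet> N s = 0 \<and>
        B s = cross3 (T s) (N s) \<and> k s > 0)"

definition osculating_mate ::
  "real set \<Rightarrow> (real \<Rightarrow> real^3) \<Rightarrow> (real \<Rightarrow> real^3) \<Rightarrow> (real \<Rightarrow> real^3) \<Rightarrow> bool" where
  "osculating_mate I T N \<beta> \<longleftrightarrow>
     (\<exists>x1 x2 :: real \<Rightarrow> real.
        \<forall>s\<in>I. x1 differentiable (at s) \<and> x2 differentiable (at s) \<and>
              (x1 s)\<^sup>2 + (x2 s)\<^sup>2 = 1 \<and>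
              (\<beta> has_vector_derivative (x1 s *\<^sub>R T s + x2 s *\<^sub>R N s)) (at s) \<and>
              vector_derivative (\<lambda>r. vector_derivative \<beta> (at r)) (at s) \<bullet> T s = 0 \<and>
              vector_derivative (\<lambda>r. vector_derivative \<beta> (at r)) (at s) \<bullet> N s = 0)"

definition general_helix :: "real set \<Rightarrow> (real \<Rightarrow> real^3) \<Rightarrow> bool" where
  "general_helix I c \<longleftrightarrow>
     (\<exists>u a. norm u = 1 \<and>
        (\<forall>s\<in>I. c differentiable (at s) \<and> vector_derivative c (at s) \<noteq> 0 \<and>
               (vector_derivative c (at s) /\<^sub>R norm (vector_derivative c (at s))) \<bullet> u = a))"

definition slant_helix :: "real set \<Rightarrow> (real \<Rightarrow> real^3) \<Rightarrow> bool" where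
  "slant_helix I c \<longleftrightarrow>
     (\<exists>T N B k t. frenet_frame I c T N B k t \<and>
        (\<exists>u a. norm u = 1 \<and> (\<forall>s\<in>I. N s \<bullet> u = a)))"

end

theory Submission
  imports Defs
begin

lemma inner_deriv:
  assumes "(f has_vector_derivative f') (at s)"
  shows "((\<lambda>r. f r \<bullet> u) has_real_derivative (f' \<bullet> u)) (at s)"
proof -
  have "((\<lambda>r. f r \<bullet> u) has_vector_derivative (f' \<bullet> u)) (at s)"
    using bounded_linear.has_vector_derivative[OF bounded_linear_inner_left assms] .
  then show ?thesis by (simp add: has_real_derivative_iff_has_vector_derivative)
qed

lemma const_inner_deriv0:
  assumes "open I" "s \<in> I" "(f has_vector_derivative f') (at s)" "\<forall>r\<in>I. f r \<bullet> u = a"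
  shows "f' \<bullet> u = 0"
proof -
  have "((\<lambda>r. a) has_real_derivative 0) (at s)" by simp
  then have "((\<lambda>r. f r \<bullet> u) has_real_derivative 0) (at s)"
    by (rule has_field_derivative_transform_within_open[where S=I]) (use assms in auto)
  then show ?thesis using inner_deriv[OF assms(3)] DERIV_unique by blast
qed

lemma zero_const:
  assumes "is_interval I" "\<forall>s\<in>I. (f has_vector_derivative f' s) (at s)" "\<forall>s\<in>I. f' s \<bullet> u = 0"
  shows "\<exists>a. \<forall>s\<in>I. f s \<bullet> u = a"
proof (rule has_field_derivative_zero_constant)
  show "convex I" using assms(1) by (simp add: is_interval_convex)
  fix x assume "x \<in> I"
  then show "((\<lambda>r. f r \<bullet> u) has_field_derivative 0) (at x within I)"
    using inner_deriv[of f "f' x" x u] assms by (auto intro: has_field_derivative_at_within)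
qed

lemma sign_const:
  fixes g :: "real \<Rightarrow> real"
  assumes "is_interval I" "continuous_on I g" "\<forall>s\<in>I. g s \<noteq> 0"
  shows "(\<forall>s\<in>I. g s > 0) \<or> (\<forall>s\<in>I. g s < 0)"
proof (rule ccontr)
  assume "\<not> ?thesis"
  then obtain a b where ab: "a \<in> I" "b \<in> I" "g a > 0" "g b < 0"
    using assms(3) by (meson linorder_neqE_linordered_idom)
  have "connected (g ` I)"
    using assms by (intro connected_continuous_image) (auto simp: is_interval_connected)
  then have "0 \<in> g ` I"
    using ab unfolding connected_iff_interval
    by (metis image_eqI less_eq_real_def)
  then show False using assms(3) by auto
qed

lemma cross_cross_left: "cross3 (cross3 (a::real^3) b) c = (a \<bullet> c) *\<^sub>R b - (b \<bullet> c) *\<^sub>R a"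
  unfolding vec_eq_iff forall_3 by (simp add: cross3_def inner_vec_def sum_3 vector_def algebra_simps)
lemma orth_basis:
  fixes T N v :: "real^3"
  assumes "norm T = 1" "norm N = 1" "T \<bullet> N = 0" "norm v = 1" "v \<bullet> T = 0" "v \<bullet> N = 0"
  shows "v = (v \<bullet> cross3 T N) *\<^sub>R cross3 T N \<and> (v \<bullet> cross3 T N)\<^sup>2 = 1"
proof -
  define B where "B = cross3 T N"
  have "(norm B)\<^sup>2 = 1" using norm_cross_dot[of T N] assms unfolding B_def
    by simp
  then have "norm B = 1 \<or> norm B = -1" by (simp only: power2_eq_1_iff)
  then have nB: "norm B = 1" using norm_ge_zero[of B] by linarith
  have "cross3 B v = 0" unfolding B_def cross_cross_left using assms by (simp add: inner_commute)
  then have c2: "(v \<bullet> B)\<^sup>2 = 1" using norm_cross_dot[of B v] nB assms by (simp add: inner_commute)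
  have "(norm (v - (v \<bullet> B) *\<^sub>R B))\<^sup>2 = (norm v)\<^sup>2 - 2 * (v \<bullet> B)\<^sup>2 + (v \<bullet> B)\<^sup>2 * (norm B)\<^sup>2"
    unfolding power2_norm_eq_inner inner_diff_left inner_diff_right inner_scaleR_left inner_scaleR_right
    by (simp add: inner_commute[of B v] power2_eq_square algebra_simps)
  also have "\<dots> = 0" using c2 nB assms(4) by simp
  finally have "v = (v \<bullet> B) *\<^sub>R B" by simp
  from this c2 show ?thesis unfolding B_def[symmetric] by (rule conjI)
qed


lemma helix_iff:
  assumes "\<And>s. s \<in> I \<Longrightarrow> c differentiable (at s)"
    and "\<And>s. s \<in> I \<Longrightarrow> vector_derivative c (at s) \<noteq> 0"
    and "\<And>s. s \<in> I \<Longrightarrow> vector_derivative c (at s) /\<^sub>R norm (vector_derivative c (at s)) = W s"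
  shows "general_helix I c \<longleftrightarrow> (\<exists>u a. norm u = 1 \<and> (\<forall>s\<in>I. W s \<bullet> u = a))"
proof
  assume "general_helix I c"
  then obtain u a where "norm u = 1" and h: "\<forall>s\<in>I. c differentiable (at s) \<and> vector_derivative c (at s) \<noteq> 0 \<and>
               (vector_derivative c (at s) /\<^sub>R norm (vector_derivative c (at s))) \<bullet> u = a"
    unfolding general_helix_def by blast
  moreover have "\<forall>s\<in>I. W s \<bullet> u = a"
  proof
    fix s assume "s \<in> I"
    then show "W s \<bullet> u = a" using h assms(3)[of s] by metis
  qed
  ultimately show "\<exists>u a. norm u = 1 \<and> (\<forall>s\<in>I. W s \<bullet> u = a)" by blast
next
  assume "\<exists>u a. norm u = 1 \<and> (\<forall>s\<in>I. W s \<bullet> u = a)"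
  then obtain u a where u: "norm u = 1" and h: "\<forall>s\<in>I. W s \<bullet> u = a" by blast
  have "\<forall>s\<in>I. c differentiable (at s) \<and> vector_derivative c (at s) \<noteq> 0 \<and>
               (vector_derivative c (at s) /\<^sub>R norm (vector_derivative c (at s))) \<bullet> u = a"
  proof
    fix s assume s: "s \<in> I"
    show "c differentiable (at s) \<and> vector_derivative c (at s) \<noteq> 0 \<and>
               (vector_derivative c (at s) /\<^sub>R norm (vector_derivative c (at s))) \<bullet> u = a"
      using assms(1)[OF s] assms(2)[OF s] assms(3)[OF s] h s by simp
  qed
  then show "general_helix I c" unfolding general_helix_def using u by blast
qed

lemma scale_const_iff:
  fixes d :: real and V :: "real \<Rightarrow> real^3"
  assumes "d = 1 \<or> d = -1"
  shows "(\<exists>a. \<forall>s\<in>I. (d *\<^sub>R V s) \<bullet> u = a) \<longleftrightarrow> (\<exists>a. \<forall>s\<in>I. V s \<bullet> u = a)"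
proof -
  have dd: "d * d = 1" using assms by auto
  show ?thesis
  proof
    assume "\<exists>a. \<forall>s\<in>I. (d *\<^sub>R V s) \<bullet> u = a"
    then obtain a where a: "\<forall>s\<in>I. (d *\<^sub>R V s) \<bullet> u = a" by blast
    have "\<forall>s\<in>I. V s \<bullet> u = d * a"
    proof
      fix s assume "s \<in> I"
      then have "d * (V s \<bullet> u) = a" using a by simp
      then have "d * d * (V s \<bullet> u) = d * a" by (simp add: mult.assoc)
      then show "V s \<bullet> u = d * a" using dd by simp
    qed
    then show "\<exists>a. \<forall>s\<in>I. V s \<bullet> u = a" by blast
  next
    assume "\<exists>a. \<forall>s\<in>I. V s \<bullet> u = a"
    then obtain a where a: "\<forall>s\<in>I. V s \<bullet> u = a" by blast
    have "\<forall>s\<in>I. (d *\<^sub>R V s) \<bullet> u = d * a" using a by simp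
    then show "\<exists>a. \<forall>s\<in>I. (d *\<^sub>R V s) \<bullet> u = a" by blast
  qed
qed

lemma ex_lift:
  assumes "\<And>u. (\<exists>a. P u a) \<longleftrightarrow> (\<exists>a. Q u a)"
  shows "(\<exists>u a. R u \<and> P u a) \<longleftrightarrow> (\<exists>u a. R u \<and> Q u a)"
  using assms by blast

theorem theorem16:
  fixes \<alpha> \<beta> T N B Tb Nb Bb :: "real \<Rightarrow> real^3"
    and \<kappa> \<tau> kb tb :: "real \<Rightarrow> real" and I :: "real set"
  assumes "open I" and "is_interval I" and "I \<noteq> {}"
    and "frenet_frame I \<alpha> T N B \<kappa> \<tau>"
    and "frenet_frame I \<beta> Tb Nb Bb kb tb"
    and "osculating_mate I T N \<beta>"
    and "\<forall>s\<in>I. vector_derivative Bb (at s) \<noteq> 0"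
  shows "(general_helix I Bb \<longleftrightarrow> slant_helix I \<beta>) \<and>
         (slant_helix I \<beta> \<longleftrightarrow> general_helix I \<alpha>)"
proof -
  note opI = assms(1) and intI = assms(2)
  have fa: "\<forall>s\<in>I.
        (\<alpha> has_vector_derivative T s) (at s) \<and>
        (T has_vector_derivative (\<kappa> s *\<^sub>R N s)) (at s) \<and>
        (N has_vector_derivative (- (\<kappa> s) *\<^sub>R T s + \<tau> s *\<^sub>R B s)) (at s) \<and>
        (B has_vector_derivative (- (\<tau> s) *\<^sub>R N s)) (at s) \<and>
        norm (T s) = 1 \<and> norm (N s) = 1 \<and> T s \<bullet> N s = 0 \<and>
        B s = cross3 (T s) (N s) \<and> \<kappa> s > 0"
    using assms(4) unfolding frenet_frame_def by blast
  have fb: "\<forall>s\<in>I.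
        (\<beta> has_vector_derivative Tb s) (at s) \<and>
        (Tb has_vector_derivative (kb s *\<^sub>R Nb s)) (at s) \<and>
        (Nb has_vector_derivative (- (kb s) *\<^sub>R Tb s + tb s *\<^sub>R Bb s)) (at s) \<and>
        (Bb has_vector_derivative (- (tb s) *\<^sub>R Nb s)) (at s) \<and>
        norm (Tb s) = 1 \<and> norm (Nb s) = 1 \<and> Tb s \<bullet> Nb s = 0 \<and>
        Bb s = cross3 (Tb s) (Nb s) \<and> kb s > 0"
    and tbc: "continuous_on I tb"
    using assms(5) unfolding frenet_frame_def by blast+
  obtain x1 x2 :: "real \<Rightarrow> real" where om: "\<forall>s\<in>I.
              vector_derivative (\<lambda>r. vector_derivative \<beta> (at r)) (at s) \<bullet> T s = 0 \<and>
              vector_derivative (\<lambda>r. vector_derivative \<beta> (at r)) (at s) \<bullet> N s = 0"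
    using assms(6) unfolding osculating_mate_def by blast

  have vdb: "vector_derivative \<beta> (at r) = Tb r" if "r \<in> I" for r
    using fb that vector_derivative_at by blast
  have vdd: "vector_derivative (\<lambda>r. vector_derivative \<beta> (at r)) (at s) = kb s *\<^sub>R Nb s"
    if "s \<in> I" for s
  proof -
    have "((\<lambda>r. vector_derivative \<beta> (at r)) has_vector_derivative kb s *\<^sub>R Nb s) (at s)"
      by (rule has_vector_derivative_transform_within_open[where S=I]) (use fb that opI vdb in auto)
    then show ?thesis by (rule vector_derivative_at)
  qed
  have NbT: "Nb s \<bullet> T s = 0" and NbN: "Nb s \<bullet> N s = 0" if "s \<in> I" for s
  proof -
    have k: "kb s > 0" using fb that by blast
    have "(kb s *\<^sub>R Nb s) \<bullet> T s = 0" "(kb s *\<^sub>R Nb s) \<bullet> N s = 0"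
      using om vdd that by auto
    then show "Nb s \<bullet> T s = 0" "Nb s \<bullet> N s = 0" using k by auto
  qed
  have NbB: "Nb s = (Nb s \<bullet> B s) *\<^sub>R B s \<and> (Nb s \<bullet> B s)\<^sup>2 = 1" if "s \<in> I" for s
    using orth_basis[of "T s" "N s" "Nb s"] fa fb NbT NbN that by auto
  have contNb: "continuous_on I Nb"
    using fb by (metis continuous_at_imp_continuous_on has_vector_derivative_continuous)
  have contB: "continuous_on I B"
    using fa by (metis continuous_at_imp_continuous_on has_vector_derivative_continuous)
  have contc: "continuous_on I (\<lambda>s. Nb s \<bullet> B s)"
    using contNb contB by (intro continuous_on_inner)
  have NbB1: "Nb s = (Nb s \<bullet> B s) *\<^sub>R B s" and NbB2: "(Nb s \<bullet> B s)\<^sup>2 = 1"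
    if "s \<in> I" for s using NbB[OF that] by blast+
  have cnz: "\<forall>s\<in>I. Nb s \<bullet> B s \<noteq> 0" using NbB2 by fastforce
  have ex: "\<exists>c0. (c0 = 1 \<or> c0 = -1) \<and> (\<forall>s\<in>I. Nb s \<bullet> B s = c0)"
  proof -
    from sign_const[OF intI contc cnz]
    show ?thesis
    proof
      assume h: "\<forall>s\<in>I. Nb s \<bullet> B s > 0"
      have "\<forall>s\<in>I. Nb s \<bullet> B s = 1"
      proof
        fix s assume "s \<in> I"
        then have "(Nb s \<bullet> B s)\<^sup>2 = 1" "Nb s \<bullet> B s > 0" using NbB2 h by auto
        then have "Nb s \<bullet> B s = 1 \<or> Nb s \<bullet> B s = -1" "Nb s \<bullet> B s > 0"
          by (simp_all only: power2_eq_1_iff)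
        then show "Nb s \<bullet> B s = 1" by linarith
      qed
      then show ?thesis by blast
    next
      assume h: "\<forall>s\<in>I. Nb s \<bullet> B s < 0"
      have "\<forall>s\<in>I. Nb s \<bullet> B s = -1"
      proof
        fix s assume "s \<in> I"
        then have "(Nb s \<bullet> B s)\<^sup>2 = 1" "Nb s \<bullet> B s < 0" using NbB2 h by auto
        then have "Nb s \<bullet> B s = 1 \<or> Nb s \<bullet> B s = -1" "Nb s \<bullet> B s < 0"
          by (simp_all only: power2_eq_1_iff)
        then show "Nb s \<bullet> B s = -1" by linarith
      qed
      then show ?thesis by blast
    qed
  qed
  then obtain c0 where c0: "c0 = 1 \<or> c0 = -1" and c0v: "\<forall>s\<in>I. Nb s \<bullet> B s = c0" by blast
  have c0I: "\<forall>s\<in>I. Nb s = c0 *\<^sub>R B s"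
  proof
    fix s assume sI: "s \<in> I"
    have "Nb s = (Nb s \<bullet> B s) *\<^sub>R B s" by (rule NbB1[OF sI])
    also have "\<dots> = c0 *\<^sub>R B s" using c0v sI by simp
    finally show "Nb s = c0 *\<^sub>R B s" .
  qed
  have taunz: "\<tau> s \<noteq> 0" if sI: "s \<in> I" for s
  proof
    assume t0: "\<tau> s = 0"
    have d1: "((\<lambda>r. c0 *\<^sub>R B r) has_vector_derivative c0 *\<^sub>R (- (\<tau> s) *\<^sub>R N s)) (at s)"
      using bounded_linear.has_vector_derivative[OF bounded_linear_scaleR_right] fa sI by blast
    have d2: "(Nb has_vector_derivative c0 *\<^sub>R (- (\<tau> s) *\<^sub>R N s)) (at s)"
      by (rule has_vector_derivative_transform_within_open[OF d1 opI sI]) (use c0I in auto)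
    have "- (kb s) *\<^sub>R Tb s + tb s *\<^sub>R Bb s = c0 *\<^sub>R (- (\<tau> s) *\<^sub>R N s)"
      using vector_derivative_unique_at d2 fb sI by blast
    then have e: "- (kb s) *\<^sub>R Tb s + tb s *\<^sub>R Bb s = 0" using t0 by simp
    have "(- (kb s) *\<^sub>R Tb s + tb s *\<^sub>R Bb s) \<bullet> Tb s = - kb s"
    proof -
      have "Tb s \<bullet> Tb s = 1" using fb sI by (metis norm_eq_1)
      moreover have "Bb s \<bullet> Tb s = 0" using fb sI dot_cross_self(1)[of "Tb s" "Nb s"]
        by (metis inner_commute)
      ultimately show ?thesis by (simp add: inner_add_left inner_diff_left)
    qed
    then have "kb s = 0" using e by simp
    then show False using fb sI by auto
  qed
  have HT: "(\<exists>a. \<forall>s\<in>I. T s \<bullet> u = a) \<longleftrightarrow> (\<exists>a. \<forall>s\<in>I. B s \<bullet> u = a)" for u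
  proof
    assume "\<exists>a. \<forall>s\<in>I. T s \<bullet> u = a"
    then obtain a where a: "\<forall>s\<in>I. T s \<bullet> u = a" by blast
    have "\<forall>s\<in>I. N s \<bullet> u = 0"
    proof
      fix s assume sI: "s \<in> I"
      have "(\<kappa> s *\<^sub>R N s) \<bullet> u = 0"
        using const_inner_deriv0[OF opI sI _ a] fa sI by blast
      then show "N s \<bullet> u = 0" using fa sI by auto
    qed
    then show "\<exists>a. \<forall>s\<in>I. B s \<bullet> u = a"
      using zero_const[OF intI, of B "\<lambda>s. - (\<tau> s) *\<^sub>R N s" u] fa by auto
  next
    assume "\<exists>a. \<forall>s\<in>I. B s \<bullet> u = a"
    then obtain a where a: "\<forall>s\<in>I. B s \<bullet> u = a" by blast
    have "\<forall>s\<in>I. N s \<bullet> u = 0"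
    proof
      fix s assume sI: "s \<in> I"
      have "(- (\<tau> s) *\<^sub>R N s) \<bullet> u = 0"
        using const_inner_deriv0[OF opI sI _ a] fa sI by blast
      then show "N s \<bullet> u = 0" using taunz[OF sI] by auto
    qed
    then show "\<exists>a. \<forall>s\<in>I. T s \<bullet> u = a"
      using zero_const[OF intI, of T "\<lambda>s. \<kappa> s *\<^sub>R N s" u] fa by auto
  qed
  have HN: "(\<exists>a. \<forall>s\<in>I. Nb s \<bullet> u = a) \<longleftrightarrow> (\<exists>a. \<forall>s\<in>I. B s \<bullet> u = a)" for u
  proof
    assume "\<exists>a. \<forall>s\<in>I. Nb s \<bullet> u = a"
    then obtain a where a: "\<forall>s\<in>I. Nb s \<bullet> u = a" by blast
    have "\<forall>s\<in>I. B s \<bullet> u = c0 * a"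
    proof
      fix s assume sI: "s \<in> I"
      have "B s = c0 *\<^sub>R Nb s" using c0I sI c0 by auto
      then show "B s \<bullet> u = c0 * a" using a sI by simp
    qed
    then show "\<exists>a. \<forall>s\<in>I. B s \<bullet> u = a" by blast
  next
    assume "\<exists>a. \<forall>s\<in>I. B s \<bullet> u = a"
    then obtain a where a: "\<forall>s\<in>I. B s \<bullet> u = a" by blast
    have "\<forall>s\<in>I. Nb s \<bullet> u = c0 * a" using c0I a by simp
    then show "\<exists>a. \<forall>s\<in>I. Nb s \<bullet> u = a" by blast
  qed
  have GA: "general_helix I \<alpha> \<longleftrightarrow> (\<exists>u a. norm u = 1 \<and> (\<forall>s\<in>I. T s \<bullet> u = a))"
  proof (rule helix_iff)
    fix s assume sI: "s \<in> I"
    have vd: "vector_derivative \<alpha> (at s) = T s" using fa sI vector_derivative_at by blast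
    have n: "norm (T s) = 1" using fa sI by blast
    show "\<alpha> differentiable (at s)" using fa sI differentiableI_vector by blast
    show "vector_derivative \<alpha> (at s) \<noteq> 0" using vd n by auto
    show "vector_derivative \<alpha> (at s) /\<^sub>R norm (vector_derivative \<alpha> (at s)) = T s"
      using vd n by simp
  qed
  have SB: "slant_helix I \<beta> \<longleftrightarrow> (\<exists>u a. norm u = 1 \<and> (\<forall>s\<in>I. Nb s \<bullet> u = a))"
  proof
    assume "slant_helix I \<beta>"
    then obtain T2 N2 B2 k2 t2 u a where f2: "frenet_frame I \<beta> T2 N2 B2 k2 t2"
      and u: "norm u = 1" and a: "\<forall>s\<in>I. N2 s \<bullet> u = a"
      unfolding slant_helix_def by blast
    have f2': "\<forall>s\<in>I. (\<beta> has_vector_derivative T2 s) (at s) \<and>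
        (T2 has_vector_derivative (k2 s *\<^sub>R N2 s)) (at s) \<and> norm (N2 s) = 1 \<and> k2 s > 0"
      using f2 unfolding frenet_frame_def by blast
    have "N2 s = Nb s" if sI: "s \<in> I" for s
    proof -
      have TT: "T2 r = Tb r" if "r \<in> I" for r
        using f2' fb that vector_derivative_unique_at by blast
      have "(Tb has_vector_derivative (k2 s *\<^sub>R N2 s)) (at s)"
      proof (rule has_vector_derivative_transform_within_open[OF _ opI sI])
        show "(T2 has_vector_derivative (k2 s *\<^sub>R N2 s)) (at s)" using f2' sI by blast
        show "\<And>y. y \<in> I \<Longrightarrow> T2 y = Tb y" by (rule TT)
      qed
      then have e: "k2 s *\<^sub>R N2 s = kb s *\<^sub>R Nb s"
        using fb sI vector_derivative_unique_at by blast
      then have "norm (k2 s *\<^sub>R N2 s) = norm (kb s *\<^sub>R Nb s)" by simp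
      moreover have "k2 s > 0" "kb s > 0" "norm (N2 s) = 1" "norm (Nb s) = 1" using f2' fb sI by auto
      ultimately have "k2 s = kb s" by simp
      moreover have "kb s > 0" using fb sI by blast
      ultimately show ?thesis using e by simp
    qed
    then show "\<exists>u a. norm u = 1 \<and> (\<forall>s\<in>I. Nb s \<bullet> u = a)" using u a by auto
  next
    assume "\<exists>u a. norm u = 1 \<and> (\<forall>s\<in>I. Nb s \<bullet> u = a)"
    then show "slant_helix I \<beta>" unfolding slant_helix_def using assms(5) by blast
  qed
  have tbnz: "tb s \<noteq> 0" if "s \<in> I" for s
  proof -
    have "vector_derivative Bb (at s) = - (tb s) *\<^sub>R Nb s"
      using fb that vector_derivative_at by blast
    then show ?thesis using assms(7) that by auto
  qed
  obtain d0 where d0: "d0 = 1 \<or> d0 = -1" and d0I: "\<forall>s\<in>I. tb s / \<bar>tb s\<bar> = - d0"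
  proof -
    have "\<forall>s\<in>I. tb s \<noteq> 0" using tbnz by blast
    from sign_const[OF intI tbc this]
    show ?thesis
    proof
      assume h: "\<forall>s\<in>I. tb s > 0"
      have "\<forall>s\<in>I. tb s / \<bar>tb s\<bar> = - (-1)" using h by auto
      then show ?thesis using that[of "-1"] by simp
    next
      assume h: "\<forall>s\<in>I. tb s < 0"
      have "\<forall>s\<in>I. tb s / \<bar>tb s\<bar> = - 1" using h by auto
      then show ?thesis using that[of "1"] by simp
    qed
  qed
  have GB: "general_helix I Bb \<longleftrightarrow> (\<exists>u a. norm u = 1 \<and> (\<forall>s\<in>I. Nb s \<bullet> u = a))"
  proof -
    have vd: "vector_derivative Bb (at s) = - (tb s) *\<^sub>R Nb s" "Bb differentiable (at s)"
      if "s \<in> I" for s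
      using fb that vector_derivative_at differentiableI_vector by blast+
    have ut: "vector_derivative Bb (at s) /\<^sub>R norm (vector_derivative Bb (at s)) = d0 *\<^sub>R Nb s"
      if sI: "s \<in> I" for s
    proof -
      have "norm (vector_derivative Bb (at s)) = \<bar>tb s\<bar>" using vd(1)[OF sI] fb sI by simp
      then have "vector_derivative Bb (at s) /\<^sub>R norm (vector_derivative Bb (at s))
          = - (tb s / \<bar>tb s\<bar>) *\<^sub>R Nb s" using vd(1)[OF sI] by (simp add: divide_inverse)
      then show ?thesis using d0I sI by simp
    qed
    have "general_helix I Bb \<longleftrightarrow> (\<exists>u a. norm u = 1 \<and> (\<forall>s\<in>I. (d0 *\<^sub>R Nb s) \<bullet> u = a))"
      by (rule helix_iff) (use vd ut assms(7) in auto)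
    also have "\<dots> \<longleftrightarrow> (\<exists>u a. norm u = 1 \<and> (\<forall>s\<in>I. Nb s \<bullet> u = a))"
      by (rule ex_lift[OF scale_const_iff[OF d0]])
    finally show ?thesis .
  qed
  have X: "(\<exists>u a. norm u = 1 \<and> (\<forall>s\<in>I. Nb s \<bullet> u = a)) \<longleftrightarrow>
        (\<exists>u a. norm u = 1 \<and> (\<forall>s\<in>I. T s \<bullet> u = a))"
    by (rule ex_lift) (simp only: HN HT)
  show ?thesis unfolding GA SB GB X by simp
qed

end
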